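(* Suppose $f$ is $L_f$-smooth, $L_{\mathbf S}^{\max}<\infty$, and $\Delta:=\tilde f^{\inf}-f^{\inf}>0$. Let $D=L_f\sqrt{L_{\mathcal D}L_{\mathbf S}^{\max}}$, $\delta^0=\tilde f(x^0)-\tilde f^{\inf}$, fix $\varepsilon>0$, and let $$T\ge\frac{12\delta^0D^2}{\varepsilon^4}\max\{3\delta^0,\Delta\},\qquad \gamma=\min\Big\{\frac{1}{D\sqrt T},\frac{\varepsilon^2}{2D^2\Delta}\Big\}.$$ Then the iterates of Double Sketched GD satisfy $\min_{0\le t<T}\mathbb E\|\nabla\tilde f(x^t)\|^2\le\varepsilon^2$.
   Context: Let $f:\mathbb R^d\to\mathbb R$, fix $s\in\mathbb R^d$, and let $\mathcal D$ be a distribution of random matrices $\mathbf S\in\mathbb R^{d\times d}$ with $\mathbb E[\mathbf S]=I$ and $\mathbb E[\mathbf S^\top\mathbf S]$ finite. Define $f_{\mathbf S}(x)=f(s+\mathbf S(x-s))$, $\tilde f(x)=\mathbb E_{\mathbf S\sim\mathcal D}[f_{\mathbf S}(x)]$, $\tilde f^{\inf}=\inf_x\tilde f(x)$, $L_{\mathcal D}=\lambda_{\max}(\mathbb E[\mathbf S^\top\mathbf S])$, and $L_{\mathbf S}^{\max}$ the smallest constant with $\lambda_{\max}(\mathbf S^\top\mathbf S)\le L_{\mathbf S}^{\max}$ a.s. Double Sketched GD: given $x^0$, for $t\ge0$ draw $\mathbf S^t\sim\mathcal D$ independently of the past and set $x^{t+1}=x^t-\gamma(\mathbf S^t)^\top\nabla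 f(s+\mathbf S^t(x^t-s))$. $f$ is $L_f$-smooth if differentiable, $f(x+h)\le f(x)+\langle\nabla f(x),h\rangle+\frac{L_f}{2}\|h\|^2$ for all $x,h$, and bounded below by $f^{\inf}\in\mathbb R$. *)

theory Defs
  imports "HOL-Probability.Probability"
begin

type_synonym 'n mat = "real^'n^'n"

definition lambda_max :: "real^'n^'n \<Rightarrow> real" where
  "lambda_max M = Max {l. \<exists>v. v \<noteq> 0 \<and> M *v v = l *\<^sub>R v}"

definition grad :: "(real^'n \<Rightarrow> real) \<Rightarrow> real^'n \<Rightarrow> real^'n" where
  "grad F x = (THE g. (F has_derivative (\<lambda>h. g \<bullet> h)) (at x))"

definition L_smooth :: "real \<Rightarrow> (real^'n \<Rightarrow> real) \<Rightarrow> (real^'n \<Rightarrow> real^'n) \<Rightarrow> bool" where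
  "L_smooth L f gf \<longleftrightarrow>
     (\<forall>x. (f has_derivative (\<lambda>h. gf x \<bullet> h)) (at x)) \<and>
     (\<forall>x h. f (x + h) \<le> f x + gf x \<bullet> h + L / 2 * (norm h)\<^sup>2)"

definition f_sketch :: "(real^'n \<Rightarrow> real) \<Rightarrow> real^'n \<Rightarrow> real^'n^'n \<Rightarrow> real^'n \<Rightarrow> real" where
  "f_sketch f s S x = f (s + S *v (x - s))"

definition f_tilde :: "(real^'n \<Rightarrow> real) \<Rightarrow> real^'n \<Rightarrow> (real^'n^'n) measure \<Rightarrow> real^'n \<Rightarrow> real" where
  "f_tilde f s D x = (\<integral>S. f_sketch f s S x \<partial>D)"

definition L_D :: "(real^'n^'n) measure \<Rightarrow> real" where
  "L_D D = lambda_max (\<integral>S. transpose S ** S \<partial>D)"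

definition L_S_max :: "(real^'n^'n) measure \<Rightarrow> real" where
  "L_S_max D = Inf {L. AE S in D. lambda_max (transpose S ** S) \<le> L}"

text \<open>Double Sketched GD iterates driven by a sequence of sketches \<omega> t = S^t.\<close>
fun dsgd :: "(real^'n \<Rightarrow> real^'n) \<Rightarrow> real^'n \<Rightarrow> real \<Rightarrow> real^'n
              \<Rightarrow> (nat \<Rightarrow> real^'n^'n) \<Rightarrow> nat \<Rightarrow> real^'n" where
  "dsgd gf s \<gamma> x0 \<omega> 0 = x0"
| "dsgd gf s \<gamma> x0 \<omega> (Suc t) =
     dsgd gf s \<gamma> x0 \<omega> t
       - \<gamma> *\<^sub>R (transpose (\<omega> t) *v gf (s + \<omega> t *v (dsgd gf s \<gamma> x0 \<omega> t - s)))"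

end

theory Submission
  imports Defs
begin

lemma sym_dot: "x \<bullet> (M *v y) = (transpose M *v x) \<bullet> (y::real^'n)"
  by (metis transpose_transpose vector_transpose_matrix dot_lmul_matrix)

lemma sym_dot': "transpose M = M \<Longrightarrow> x \<bullet> (M *v y) = y \<bullet> (M *v (x::real^'n))"
  by (metis sym_dot inner_commute)

lemma eig_finite:
  fixes M :: "real^'n^'n" assumes sym: "transpose M = M"
  shows "finite {l. \<exists>v. v \<noteq> 0 \<and> M *v v = l *\<^sub>R v}"
proof -
  define E where "E = {l. \<exists>v. v \<noteq> 0 \<and> M *v v = l *\<^sub>R v}"
  define ev where "ev l = (SOME v. v \<noteq> 0 \<and> M *v v = l *\<^sub>R v)" for l
  have ev: "ev l \<noteq> 0 \<and> M *v ev l = l *\<^sub>R ev l" if "l \<in> E" for l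
    using that unfolding E_def ev_def by (metis (mono_tags, lifting) mem_Collect_eq someI)
  have orth: "ev l1 \<bullet> ev l2 = 0" if "l1 \<in> E" "l2 \<in> E" "l1 \<noteq> l2" for l1 l2
  proof -
    have "l1 * (ev l1 \<bullet> ev l2) = (M *v ev l1) \<bullet> ev l2" using ev[OF that(1)] by simp
    also have "\<dots> = ev l1 \<bullet> (M *v ev l2)" using sym_dot'[OF sym] by (metis inner_commute)
    also have "\<dots> = l2 * (ev l1 \<bullet> ev l2)" using ev[OF that(2)] by simp
    finally have "(l1 - l2) * (ev l1 \<bullet> ev l2) = 0" by (simp add: algebra_simps)
    then show ?thesis using that(3) by simp
  qed
  have inj: "inj_on ev E"
  proof
    fix l1 l2 assume "l1 \<in> E" "l2 \<in> E" "ev l1 = ev l2"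
    then have "l1 *\<^sub>R ev l1 = l2 *\<^sub>R ev l1" "ev l1 \<noteq> 0" using ev by metis+
    then show "l1 = l2" by (simp add: scaleR_cancel_right)
  qed
  have "pairwise orthogonal (ev ` E)"
    unfolding pairwise_def orthogonal_def using orth by auto
  moreover have "0 \<notin> ev ` E" using ev by auto
  ultimately have "independent (ev ` E)" by (rule pairwise_orthogonal_independent)
  then have "finite (ev ` E)" using independent_imp_finite by blast
  then show ?thesis using inj finite_imageD unfolding E_def by blast
qed

lemma lambda_max_ge:
  fixes M :: "real^'n^'n" assumes sym: "transpose M = M" and u: "norm u = 1"
  shows "u \<bullet> (M *v u) \<le> lambda_max M"
proof -
  let ?q = "\<lambda>x. x \<bullet> (M *v x)"
  have cont: "continuous_on (sphere 0 1) ?q"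
    by (intro continuous_intros linear_continuous_on matrix_vector_mul_bounded_linear)
  obtain v where v: "v \<in> sphere 0 1" "\<forall>y\<in>sphere 0 1. ?q y \<le> ?q v"
    using continuous_attains_sup[OF compact_sphere _ cont] u by force
  have nv: "norm v = 1" using v by simp
  have vv: "v \<bullet> v = 1" using nv by (simp add: norm_eq_1)
  have hom: "?q z \<le> ?q v * (norm z)^2" for z
  proof (cases "z = 0")
    case True then show ?thesis by simp
  next
    case False
    then have "(1/norm z) *\<^sub>R z \<in> sphere 0 1" by simp
    then have "?q ((1/norm z) *\<^sub>R z) \<le> ?q v" using v by blast
    moreover have "?q ((1/norm z) *\<^sub>R z) = (1/norm z)^2 * ?q z"
      unfolding matrix_vector_mult_scaleR by (simp add: power2_eq_square)
    ultimately have "(1/norm z)^2 * ?q z \<le> ?q v" by simp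
    then show ?thesis using False by (simp add: field_simps)
  qed
  define w where "w = M *v v - ?q v *\<^sub>R v"
  have wv: "w \<bullet> v = 0"
  proof -
    have "(M *v v) \<bullet> v = v \<bullet> (M *v v)" by (rule inner_commute)
    then show ?thesis unfolding w_def using vv by (simp add: inner_diff_left)
  qed
  have wMv: "w \<bullet> (M *v v) = w \<bullet> w"
    unfolding w_def by (simp add: inner_diff_left inner_diff_right inner_commute vv algebra_simps)
  have key: "2*t*(w \<bullet> w) \<le> t^2 * (?q v * (w \<bullet> w) - ?q w)" for t
  proof -
    have "?q (v + t *\<^sub>R w) = ?q v + t * (v \<bullet> (M *v w)) + t * (w \<bullet> (M *v v)) + t^2 * ?q w"
      by (simp add: matrix_vector_right_distrib matrix_vector_mult_scaleR inner_add_left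
          inner_add_right power2_eq_square algebra_simps)
    also have "v \<bullet> (M *v w) = w \<bullet> (M *v v)" using sym_dot'[OF sym] by blast
    finally have e1: "?q (v + t *\<^sub>R w) = ?q v + 2*t*(w \<bullet> w) + t^2 * ?q w" using wMv by simp
    have "(norm (v + t *\<^sub>R w))^2 = (v + t *\<^sub>R w) \<bullet> (v + t *\<^sub>R w)" by (simp add: power2_norm_eq_inner)
    also have "\<dots> = 1 + t^2 * (w \<bullet> w)"
      using vv wv by (simp add: inner_add_left inner_add_right inner_commute power2_eq_square)
    finally have e2: "(norm (v + t *\<^sub>R w))^2 = 1 + t^2 * (w \<bullet> w)" .
    show ?thesis using hom[of "v + t *\<^sub>R w"] e1 e2 by (simp add: algebra_simps)
  qed
  have w0: "w \<bullet> w = 0"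
  proof (rule ccontr)
    assume "w \<bullet> w \<noteq> 0"
    then have a: "w \<bullet> w > 0" by (metis inner_gt_zero_iff inner_eq_zero_iff)
    define K where "K = ?q v * (w \<bullet> w) - ?q w"
    define t where "t = (w \<bullet> w) / (\<bar>K\<bar> + 1)"
    have t: "t > 0" unfolding t_def using a by (simp add: add_pos_nonneg)
    have "2*t*(w \<bullet> w) \<le> t^2 * K" using key unfolding K_def by blast
    then have "2*(w \<bullet> w) \<le> t * K" using t by (simp add: power2_eq_square mult.assoc)
    also have "\<dots> \<le> t * \<bar>K\<bar>" using t by (simp add: mult_left_mono)
    also have "\<dots> < w \<bullet> w" unfolding t_def using a
      by (simp add: field_simps)
    finally show False using a by simp
  qed
  then have "M *v v = ?q v *\<^sub>R v" unfolding w_def by simp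
  moreover have "v \<noteq> 0" using nv by auto
  ultimately have inE: "?q v \<in> {l. \<exists>v. v \<noteq> 0 \<and> M *v v = l *\<^sub>R v}" by blast
  have "?q u \<le> ?q v" using v u by simp
  also have "\<dots> \<le> lambda_max M" unfolding lambda_max_def
    using inE eig_finite[OF sym] by (rule Max_ge[rotated])
  finally show ?thesis .
qed

lemma bl_mv: "bounded_linear (\<lambda>A::real^'n^'m. A *v u)"
  unfolding linear_conv_bounded_linear[symmetric]
  by (rule linearI) (simp_all add: matrix_vector_mult_add_rdistrib scaleR_matrix_vector_assoc)

lemma bl_transpose: "bounded_linear (transpose :: real^'n^'m \<Rightarrow> real^'m^'n)"
  unfolding linear_conv_bounded_linear[symmetric]
  by (rule linearI) (simp_all add: transpose_def vec_eq_iff)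

lemma bl_quad: "bounded_linear (\<lambda>A::real^'n^'n. u \<bullet> (A *v u))"
  by (rule bounded_linear_compose[OF bounded_linear_inner_right bl_mv])

lemma quad_STS: fixes S :: "real^'n^'m" shows "u \<bullet> ((transpose S ** S) *v u) = (norm (S *v u))^2"
proof -
  have "u \<bullet> ((transpose S ** S) *v u) = u \<bullet> (transpose S *v (S *v u))"
    by (simp add: matrix_vector_mul_assoc)
  also have "\<dots> = (S *v u) \<bullet> (S *v u)" using sym_dot[of u "transpose S" "S *v u"] by simp
  finally show ?thesis by (simp add: power2_norm_eq_inner)
qed

lemma sym_STS: "transpose (transpose S ** S) = transpose S ** (S::real^'n^'n)"
  by (simp add: matrix_transpose_mul)

lemma norm_Su_le: fixes S :: "real^'n^'n" shows "(norm (S *v u))^2 \<le> lambda_max (transpose S ** S) * (norm u)^2"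
proof (cases "u = 0")
  case True then show ?thesis by simp
next
  case False
  define u' where "u' = (1/norm u) *\<^sub>R u"
  have "norm u' = 1" using False unfolding u'_def by simp
  then have "(norm (S *v u'))^2 \<le> lambda_max (transpose S ** S)"
    using lambda_max_ge[OF sym_STS \<open>norm u' = 1\<close>, of S] quad_STS[of u' S] by simp
  moreover have "S *v u' = (1/norm u) *\<^sub>R (S *v u)" unfolding u'_def matrix_vector_mult_scaleR ..
  ultimately have "(norm (S *v u) / norm u)^2 \<le> lambda_max (transpose S ** S)"
    by simp
  then show ?thesis using False by (simp add: power_divide field_simps)
qed

lemma lambda_STS_nonneg: "lambda_max (transpose S ** (S::real^'n^'n)) \<ge> 0"
proof -
  have n: "norm (axis undefined 1 :: real^'n) = 1" by (rule norm_axis_1)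
  show ?thesis using lambda_max_ge[OF sym_STS n, of S] quad_STS[of "axis undefined 1" S]
    by (metis zero_le_power2 order_trans)
qed

locale dsgd_setting =
  fixes f :: "real^'n \<Rightarrow> real" and gf :: "real^'n \<Rightarrow> real^'n"
    and s :: "real^'n" and D :: "(real^'n^'n) measure" and Lf :: real
  assumes D_prob: "prob_space D"
    and D_sets: "sets D = sets borel"
    and ES: "integrable D (\<lambda>S. S)" "(\<integral>S. S \<partial>D) = mat 1"
    and ESTS: "integrable D (\<lambda>S. transpose S ** S)"
    and smooth: "L_smooth Lf f gf"
    and bdd: "bdd_below (range f)"
    and Lmax_fin: "\<exists>L. AE S in D. lambda_max (transpose S ** S) \<le> L"
    and Delta_pos: "Inf (range (f_tilde f s D)) - Inf (range f) > 0"
begin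

interpretation P: prob_space D by (rule D_prob)

lemma meas_D: "measurable D N = measurable borel N"
  by (rule measurable_cong_sets[OF D_sets refl])

abbreviation "Ls \<equiv> L_S_max D"
abbreviation "LD \<equiv> L_D D"

lemma AE_Ls: "AE S in D. lambda_max (transpose S ** S) \<le> Ls"
proof -
  define A where "A = {L. AE S in D. lambda_max (transpose S ** S) \<le> L}"
  have ne: "A \<noteq> {}" using Lmax_fin unfolding A_def by auto
  have bb: "bdd_below A"
  proof
    fix L assume "L \<in> A"
    then have "AE S in D. lambda_max (transpose S ** S) \<le> L" unfolding A_def by simp
    then have a: "AE S in D. lambda_max (transpose S ** S) \<le> L" .
    have "\<exists>S::real^'n^'n. lambda_max (transpose S ** S) \<le> L"
    proof (rule ccontr)
      assume b: "\<not> (\<exists>S::real^'n^'n. lambda_max (transpose S ** S) \<le> L)"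
      from a have "AE S in D. False" by (rule eventually_mono) (use b in blast)
      then show False by (simp add: P.AE_False)
    qed
    then obtain S :: "real^'n^'n" where "lambda_max (transpose S ** S) \<le> L" by blast
    then show "0 \<le> L" using lambda_STS_nonneg[of S] by linarith
  qed
  have "\<forall>m::nat. AE S in D. lambda_max (transpose S ** S) \<le> Inf A + 1/(Suc m)"
  proof
    fix m :: nat
    have "Inf A < Inf A + 1/(Suc m)" by simp
    then obtain L where "L \<in> A" "L < Inf A + 1/(Suc m)" using cInf_lessD[OF ne] by blast
    then show "AE S in D. lambda_max (transpose S ** S) \<le> Inf A + 1/(Suc m)"
      unfolding A_def by (auto elim: eventually_mono)
  qed
  then have "AE S in D. \<forall>m::nat. lambda_max (transpose S ** S) \<le> Inf A + 1/(Suc m)"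
    by (simp add: AE_all_countable)
  then show ?thesis
  proof (rule eventually_mono)
    fix S assume H: "\<forall>m::nat. lambda_max (transpose S ** S) \<le> Inf A + 1/(Suc m)"
    show "lambda_max (transpose S ** S) \<le> Ls"
    proof (rule ccontr)
      assume "\<not> ?thesis"
      then have d: "lambda_max (transpose S ** S) - Inf A > 0" unfolding L_S_max_def A_def by simp
      obtain m :: nat where "1 / (lambda_max (transpose S ** S) - Inf A) < m"
        using reals_Archimedean2 by blast
      then have "1 < m * (lambda_max (transpose S ** S) - Inf A)" using d
        by (simp add: divide_less_eq)
      then have "1 < (Suc m) * (lambda_max (transpose S ** S) - Inf A)" using d
        by (smt (verit) of_nat_Suc distrib_right mult_cancel_right1)
      then have "1/(Suc m) < lambda_max (transpose S ** S) - Inf A"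
        by (simp add: divide_less_eq mult.commute)
      then show False using H[rule_format, of m] by linarith
    qed
  qed
qed

lemma AE_good: "AE S in D. \<forall>u. (norm (S *v u))^2 \<le> Ls * (norm u)^2"
  using AE_Ls
proof (rule eventually_mono)
  fix S :: "real^'n^'n" assume LL: "lambda_max (transpose S ** S) \<le> Ls"
  show "\<forall>u. (norm (S *v u))^2 \<le> Ls * (norm u)^2"
  proof
    fix u
    have "(norm (S *v u))^2 \<le> lambda_max (transpose S ** S) * (norm u)^2" by (rule norm_Su_le)
    also have "\<dots> \<le> Ls * (norm u)^2" using LL
      by (rule mult_right_mono) simp
    finally show "(norm (S *v u))^2 \<le> Ls * (norm u)^2" .
  qed
qed

lemma int_Su: "integrable D (\<lambda>S. S *v u)"
  by (rule integrable_bounded_linear[OF bl_mv ES(1)])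

lemma E_Su: "(\<integral>S. S *v u \<partial>D) = u"
  using integral_bounded_linear[OF bl_mv ES(1), of u] ES(2) by simp

lemma int_sq: "integrable D (\<lambda>S. (norm (S *v u))^2)"
  using integrable_bounded_linear[OF bl_quad ESTS, of u] by (simp add: quad_STS)

lemma E_sq: "(\<integral>S. (norm (S *v u))^2 \<partial>D) = u \<bullet> ((\<integral>S. transpose S ** S \<partial>D) *v u)"
  using integral_bounded_linear[OF bl_quad ESTS, of u] by (simp add: quad_STS)

lemma ESTS_sym: "transpose (\<integral>S. transpose S ** S \<partial>D) = (\<integral>S. transpose S ** S \<partial>D)"
  using integral_bounded_linear[OF bl_transpose ESTS] by (simp add: sym_STS)

lemma E_sq_le: "(\<integral>S. (norm (S *v u))^2 \<partial>D) \<le> LD * (norm u)^2"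
proof (cases "u = 0")
  case True then show ?thesis by simp
next
  case False
  define u' where "u' = (1/norm u) *\<^sub>R u"
  have "norm u' = 1" using False unfolding u'_def by simp
  then have "(\<integral>S. (norm (S *v u'))^2 \<partial>D) \<le> LD"
    unfolding E_sq L_D_def by (rule lambda_max_ge[OF ESTS_sym])
  moreover have eq: "(\<lambda>S. (norm (S *v u'))^2) = (\<lambda>S. (1/norm u)^2 * (norm (S *v u))^2)"
    unfolding u'_def matrix_vector_mult_scaleR by (auto simp: power_divide)
  moreover have "(\<integral>S. (norm (S *v u'))^2 \<partial>D) = (1/norm u)^2 * (\<integral>S. (norm (S *v u))^2 \<partial>D)"
    unfolding eq by (rule integral_mult_right_zero)
  ultimately have "(1/norm u)^2 * (\<integral>S. (norm (S *v u))^2 \<partial>D) \<le> LD"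
    by linarith
  then show ?thesis using False by (simp add: field_simps)
qed

lemma E_sq_ge: "norm u = 1 \<Longrightarrow> (\<integral>S. (norm (S *v u))^2 \<partial>D) \<ge> 1"
proof -
  assume u: "norm u = 1"
  have uu: "u \<bullet> u = 1" using u by (simp add: norm_eq_1)
  have pt: "u \<bullet> (S *v u) \<le> (1 + (norm (S *v u))^2) / 2" for S
  proof -
    have "0 \<le> (norm (S *v u - u))^2" by simp
    also have "\<dots> = (norm (S *v u))^2 - 2 * (u \<bullet> (S *v u)) + 1"
      by (simp add: power2_norm_eq_inner inner_diff_left inner_diff_right uu inner_commute)
    finally show ?thesis by simp
  qed
  have "1 = u \<bullet> (\<integral>S. S *v u \<partial>D)" using E_Su uu by simp
  also have "\<dots> = (\<integral>S. u \<bullet> (S *v u) \<partial>D)" using int_Su by (simp add: integral_inner_right)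
  also have "\<dots> \<le> (\<integral>S. (1 + (norm (S *v u))^2) / 2 \<partial>D)"
    by (intro integral_mono pt integrable_inner_right int_Su integrable_divide Bochner_Integration.integrable_add[OF P.integrable_const int_sq])
  also have "\<dots> = (1 + (\<integral>S. (norm (S *v u))^2 \<partial>D)) / 2"
    using int_sq by (simp add: P.prob_space)
  finally show ?thesis by simp
qed

lemma LD_ge1: "LD \<ge> 1"
  using E_sq_le[of "axis undefined 1"] E_sq_ge[OF norm_axis_1[of undefined]] by simp

lemma Ls_ge1: "Ls \<ge> 1"
proof -
  let ?u = "axis undefined 1 :: real^'n"
  have "1 \<le> (\<integral>S. (norm (S *v ?u))^2 \<partial>D)" using E_sq_ge[OF norm_axis_1[of undefined]] .
  also have "\<dots> \<le> (\<integral>S. Ls \<partial>D)"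
    using AE_good by (intro integral_mono_AE int_sq P.integrable_const)
      (auto elim!: eventually_mono dest: spec[where x="axis undefined 1"])
  also have "\<dots> = Ls" by (simp add: P.prob_space)
  finally show ?thesis .
qed

end

lemma deriv_meas:
  fixes F :: "real^'n \<Rightarrow> real" and g :: "real^'n \<Rightarrow> real^'n"
  assumes d: "\<And>x. (F has_derivative (\<lambda>h. g x \<bullet> h)) (at x)"
  shows "g \<in> borel_measurable borel"
proof -
  define t where "t m = inverse (real (Suc m))" for m
  have tpos: "t m > 0" for m unfolding t_def by simp
  have contF: "continuous_on UNIV F"
    using d has_derivative_continuous by (metis continuous_at_imp_continuous_on)
  have mF: "(\<lambda>x. F (x + c)) \<in> borel_measurable borel" for c
    by (intro borel_measurable_continuous_onI continuous_on_compose2[OF contF])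
       (auto intro: continuous_intros)
  have mF0: "F \<in> borel_measurable borel" using mF[of 0] by simp
  define Q where "Q m x = (\<Sum>i\<in>Basis. ((F (x + t m *\<^sub>R i) - F x) / t m) *\<^sub>R i)" for m x
  have mQ: "Q m \<in> borel_measurable borel" for m
    unfolding Q_def
    by (intro borel_measurable_sum borel_measurable_scaleR borel_measurable_divide
        borel_measurable_diff mF mF0 borel_measurable_const)
  have lim: "(\<lambda>m. Q m x) \<longlonglongrightarrow> g x" for x
  proof -
    have "(\<lambda>m. (F (x + t m *\<^sub>R i) - F x) / t m) \<longlonglongrightarrow> g x \<bullet> i" if i: "i \<in> Basis" for i
    proof -
      have ni: "norm i = 1" using i by simp
      have H: "((\<lambda>y. norm (F y - F x - g x \<bullet> (y - x)) / norm (y - x)) \<longlongrightarrow> 0) (at x)"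
        using d[of x] by (simp add: has_derivative_iff_norm)
      define X where "X m = x + t m *\<^sub>R i" for m
      have Xne: "\<forall>m. X m \<in> UNIV - {x}" unfolding X_def using tpos ni by (auto simp: less_le)
      have t0: "t \<longlonglongrightarrow> 0" unfolding t_def by (rule LIMSEQ_inverse_real_of_nat)
      have Xl: "X \<longlonglongrightarrow> x" unfolding X_def using tendsto_add[OF tendsto_const tendsto_scaleR[OF t0 tendsto_const]]
        by simp
      have "((\<lambda>y. norm (F y - F x - g x \<bullet> (y - x)) / norm (y - x)) \<circ> X) \<longlonglongrightarrow> 0"
        using H Xne Xl unfolding tendsto_at_iff_sequentially by blast
      moreover have "((\<lambda>y. norm (F y - F x - g x \<bullet> (y - x)) / norm (y - x)) \<circ> X)
          = (\<lambda>m. \<bar>(F (x + t m *\<^sub>R i) - F x) / t m - g x \<bullet> i\<bar>)"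
      proof (rule ext)
        fix m
        have "norm (X m - x) = t m" unfolding X_def using tpos[of m] ni by simp
        moreover have "g x \<bullet> (X m - x) = t m * (g x \<bullet> i)" unfolding X_def by simp
        ultimately show "((\<lambda>y. norm (F y - F x - g x \<bullet> (y - x)) / norm (y - x)) \<circ> X) m
          = \<bar>(F (x + t m *\<^sub>R i) - F x) / t m - g x \<bullet> i\<bar>"
          using tpos[of m] unfolding X_def
          by (simp add: abs_div_pos diff_divide_distrib)
      qed
      ultimately have "(\<lambda>m. \<bar>(F (x + t m *\<^sub>R i) - F x) / t m - g x \<bullet> i\<bar>) \<longlonglongrightarrow> 0" by metis
      then have "(\<lambda>m. (F (x + t m *\<^sub>R i) - F x) / t m - g x \<bullet> i) \<longlonglongrightarrow> 0"
        by (simp add: tendsto_rabs_zero_iff)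
      from tendsto_add[OF this tendsto_const[of "g x \<bullet> i"]] show ?thesis by simp
    qed
    then have "(\<lambda>m. Q m x) \<longlonglongrightarrow> (\<Sum>i\<in>Basis. (g x \<bullet> i) *\<^sub>R i)"
      unfolding Q_def by (intro tendsto_sum tendsto_scaleR tendsto_const) auto
    then show ?thesis by (simp add: euclidean_representation)
  qed
  show ?thesis by (rule borel_measurable_LIMSEQ_metric[OF mQ lim])
qed

context dsgd_setting begin

interpretation P: prob_space D by (rule D_prob)

abbreviation "finf \<equiv> Inf (range f)"
abbreviation "ft \<equiv> f_tilde f s D"

lemma gf_deriv: "(f has_derivative (\<lambda>h. gf x \<bullet> h)) (at x)"
  using smooth unfolding L_smooth_def by blast

lemma f_up: "f (x + h) \<le> f x + gf x \<bullet> h + Lf / 2 * (norm h)^2"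
  using smooth unfolding L_smooth_def by blast

lemma f_ge: "finf \<le> f y"
  using bdd by (simp add: cInf_lower)

lemma cont_f: "continuous_on UNIV f"
  using gf_deriv has_derivative_continuous by (metis continuous_at_imp_continuous_on)

lemma meas_gf: "gf \<in> borel_measurable borel"
  by (rule deriv_meas[OF gf_deriv])

lemma meas_f: "f \<in> borel_measurable borel"
  by (rule borel_measurable_continuous_onI[OF cont_f])

lemma Lf_pos: "Lf > 0"
proof (rule ccontr)
  assume "\<not> Lf > 0"
  then have L0: "Lf \<le> 0" by simp
  have g0: "gf x = 0" for x
  proof (rule ccontr)
    assume gne: "gf x \<noteq> 0"
    define a where "a = (norm (gf x))^2"
    have a: "a > 0" using gne unfolding a_def by simp
    define t where "t = (f x - finf + 1) / a"
    have "f (x + (- t) *\<^sub>R gf x) \<le> f x + gf x \<bullet> ((- t) *\<^sub>R gf x) + Lf / 2 * (norm ((- t) *\<^sub>R gf x))^2"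
      by (rule f_up)
    also have "\<dots> \<le> f x - t * a"
      using L0 unfolding a_def by (simp add: power2_norm_eq_inner mult_nonpos_nonneg)
    also have "\<dots> = finf - 1" unfolding t_def using a by simp
    finally show False using f_ge[of "x + (- t) *\<^sub>R gf x"] by simp
  qed
  have fle: "f (x + h) \<le> f x" for x h
  proof -
    have "Lf * (norm h)^2 \<le> 0" using L0 by (rule mult_nonpos_nonneg) simp
    then show ?thesis using f_up[of x h] g0[of x] by simp
  qed
  have fc: "f y = f 0" for y
    using fle[of 0 y] fle[of y "- y"] by simp
  have ftc: "ft x = f 0" for x
    unfolding f_tilde_def f_sketch_def by (subst fc) (simp add: P.prob_space)
  have "Inf (range ft) = f 0" using ftc by simp
  moreover have "range f = {f 0}" using fc by auto
  then have "finf = f 0" by simp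
  ultimately show False using Delta_pos by simp
qed

lemma gf_bound: "(norm (gf y))^2 \<le> 2 * Lf * (f y - finf)"
proof -
  have L: "Lf > 0" by (rule Lf_pos)
  have "f (y + (- (1/Lf)) *\<^sub>R gf y) \<le> f y + gf y \<bullet> ((- (1/Lf)) *\<^sub>R gf y) + Lf / 2 * (norm ((- (1/Lf)) *\<^sub>R gf y))^2"
    by (rule f_up)
  also have "\<dots> = f y - (norm (gf y))^2 / (2 * Lf)"
  proof -
    have e1: "gf y \<bullet> ((- (1/Lf)) *\<^sub>R gf y) = - ((norm (gf y))^2 / Lf)"
      by (simp add: power2_norm_eq_inner)
    have e2: "(norm ((- (1/Lf)) *\<^sub>R gf y))^2 = (norm (gf y))^2 / Lf^2"
      by (simp add: power_divide power_mult_distrib)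
    show ?thesis unfolding e1 e2 using L by (simp add: field_simps power2_eq_square)
  qed
  finally have "finf \<le> f y - (norm (gf y))^2 / (2 * Lf)"
    using f_ge[of "y + (- (1/Lf)) *\<^sub>R gf y"] by linarith
  then show ?thesis using L by (simp add: field_simps)
qed

definition good :: "real^'n^'n \<Rightarrow> bool" where
  "good S \<longleftrightarrow> (\<forall>u. (norm (S *v u))^2 \<le> Ls * (norm u)^2)"

lemma AE_good': "AE S in D. good S"
  using AE_good unfolding good_def .

lemma good_norm: "good S \<Longrightarrow> norm (S *v u) \<le> sqrt Ls * norm u"
proof -
  assume "good S"
  then have "(norm (S *v u))^2 \<le> Ls * (norm u)^2" unfolding good_def by blast
  then have "sqrt ((norm (S *v u))^2) \<le> sqrt (Ls * (norm u)^2)" by (rule real_sqrt_le_mono)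
  then show ?thesis by (simp add: real_sqrt_mult)
qed

lemma good_normT: "good S \<Longrightarrow> norm (transpose S *v w) \<le> sqrt Ls * norm w"
proof -
  assume g: "good S"
  let ?v = "transpose S *v w"
  have "(norm ?v)^2 = w \<bullet> (S *v ?v)"
    using sym_dot[of w S ?v] by (simp add: power2_norm_eq_inner)
  also have "\<dots> \<le> norm w * norm (S *v ?v)" by (rule norm_cauchy_schwarz)
  also have "\<dots> \<le> norm w * (sqrt Ls * norm ?v)"
    by (rule mult_left_mono[OF good_norm[OF g]]) simp
  finally have "norm ?v * norm ?v \<le> norm ?v * (sqrt Ls * norm w)"
    by (simp add: power2_eq_square algebra_simps)
  then show ?thesis
    using Ls_ge1 by (cases "norm ?v = 0") (auto simp: mult_le_cancel_left)
qed


definition yS where "yS S x = s + S *v (x - s)"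
definition gS where "gS x S = transpose S *v gf (yS S x)"
definition Bf where "Bf R = f s + norm (gf s) * (sqrt Ls * R) + Lf / 2 * (Ls * R^2)"
definition cg where "cg R = sqrt Ls * sqrt (2 * Lf * (Bf R - finf))"

lemma Bf_mono: "0 \<le> R \<Longrightarrow> R \<le> R' \<Longrightarrow> Bf R \<le> Bf R'"
  unfolding Bf_def using Lf_pos Ls_ge1
  by (intro add_mono mult_left_mono power_mono) auto

lemma cg_mono: "0 \<le> R \<Longrightarrow> R \<le> R' \<Longrightarrow> cg R \<le> cg R'"
  unfolding cg_def using Lf_pos Ls_ge1 Bf_mono[of R R']
  by (intro mult_left_mono real_sqrt_le_mono) auto

lemma good_f_bound: "good S \<Longrightarrow> f (yS S x) \<le> Bf (norm (x - s))"
proof -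
  assume g: "good S"
  let ?h = "S *v (x - s)"
  have "f (yS S x) \<le> f s + gf s \<bullet> ?h + Lf / 2 * (norm ?h)^2"
    unfolding yS_def by (rule f_up)
  also have "gf s \<bullet> ?h \<le> norm (gf s) * (sqrt Ls * norm (x - s))"
    using norm_cauchy_schwarz[of "gf s" ?h] mult_left_mono[OF good_norm[OF g, of "x - s"], of "norm (gf s)"]
    by simp
  also have "(norm ?h)^2 \<le> Ls * (norm (x - s))^2" using g unfolding good_def by blast
  finally show ?thesis unfolding Bf_def using Lf_pos by (simp add: algebra_simps)
qed

lemma norm_gf_le: "norm (gf y) \<le> sqrt (2 * Lf * (f y - finf))"
  using real_sqrt_le_mono[OF gf_bound[of y]] by simp

lemma good_g_bound: "good S \<Longrightarrow> norm (gS x S) \<le> cg (norm (x - s))"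
proof -
  assume g: "good S"
  have "norm (gS x S) \<le> sqrt Ls * norm (gf (yS S x))"
    unfolding gS_def by (rule good_normT[OF g])
  also have "\<dots> \<le> sqrt Ls * sqrt (2 * Lf * (f (yS S x) - finf))"
    using Ls_ge1 by (intro mult_left_mono[OF norm_gf_le]) simp
  also have "\<dots> \<le> cg (norm (x - s))"
    unfolding cg_def using good_f_bound[OF g, of x] Lf_pos Ls_ge1
    by (intro mult_left_mono real_sqrt_le_mono) auto
  finally show ?thesis .
qed

end

lemma cont_mv[continuous_intros]:
  "continuous_on S A \<Longrightarrow> continuous_on S v \<Longrightarrow> continuous_on S (\<lambda>x. (A x :: real^'n^'m) *v v x)"
  unfolding matrix_vector_mult_def by (intro continuous_intros)

lemma cont_tr[continuous_intros]:
  "continuous_on S A \<Longrightarrow> continuous_on S (\<lambda>x. transpose (A x :: real^'n^'m))"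
  unfolding transpose_def by (intro continuous_intros)

lemma meas_cont2:
  fixes h :: "'a::second_countable_topology \<Rightarrow> 'b::second_countable_topology \<Rightarrow> 'c::{second_countable_topology}"
  assumes c: "continuous_on UNIV (\<lambda>p. h (fst p) (snd p))"
    and a: "a \<in> borel_measurable M" and b: "b \<in> borel_measurable M"
  shows "(\<lambda>x. h (a x) (b x)) \<in> borel_measurable M"
proof -
  have "(\<lambda>x. (a x, b x)) \<in> measurable M (borel \<Otimes>\<^sub>M borel)" using a b by (rule measurable_Pair)
  then have m: "(\<lambda>x. (a x, b x)) \<in> borel_measurable M" by (simp add: borel_prod)
  have "(\<lambda>p. h (fst p) (snd p)) \<in> borel_measurable borel" by (rule borel_measurable_continuous_onI[OF c])
  from measurable_compose[OF m this] show ?thesis by simp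
qed

lemma meas_mv: "A \<in> borel_measurable M \<Longrightarrow> v \<in> borel_measurable M \<Longrightarrow>
   (\<lambda>x. (A x :: real^'n^'m) *v v x) \<in> borel_measurable M"
  by (rule meas_cont2[where h="\<lambda>A v. A *v v"]) (auto intro!: continuous_intros)

lemma meas_tr: "A \<in> borel_measurable M \<Longrightarrow> (\<lambda>x. transpose (A x :: real^'n^'m)) \<in> borel_measurable M"
  by (rule measurable_compose[OF _ borel_measurable_continuous_onI]) (auto intro!: continuous_intros)

context dsgd_setting begin

interpretation P: prob_space D by (rule D_prob)

lemma meas_yS: "A \<in> borel_measurable M \<Longrightarrow> a \<in> borel_measurable M \<Longrightarrow> (\<lambda>w. yS (A w) (a w)) \<in> borel_measurable M"
  unfolding yS_def by (intro borel_measurable_add borel_measurable_const meas_mv borel_measurable_diff)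

lemma meas_gS: "A \<in> borel_measurable M \<Longrightarrow> a \<in> borel_measurable M \<Longrightarrow> (\<lambda>w. gS (a w) (A w)) \<in> borel_measurable M"
  unfolding gS_def by (intro meas_mv meas_tr measurable_compose[OF meas_yS meas_gf])

lemma meas_fyS: "A \<in> borel_measurable M \<Longrightarrow> a \<in> borel_measurable M \<Longrightarrow> (\<lambda>w. f (yS (A w) (a w))) \<in> borel_measurable M"
  by (intro measurable_compose[OF meas_yS meas_f])

lemma id_D: "(\<lambda>S. S) \<in> borel_measurable D"
  by (rule measurable_ident_sets[OF D_sets])

lemma int_fy: "integrable D (\<lambda>S. f (yS S x))"
proof (rule P.integrable_const_bound[where B="max \<bar>finf\<bar> \<bar>Bf (norm (x - s))\<bar>"])
  show "AE S in D. norm (f (yS S x)) \<le> max \<bar>finf\<bar> \<bar>Bf (norm (x - s))\<bar>"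
    using AE_good'
  proof (rule eventually_mono)
    fix S assume "good S"
    then show "norm (f (yS S x)) \<le> max \<bar>finf\<bar> \<bar>Bf (norm (x - s))\<bar>"
      using good_f_bound[of S x] f_ge[of "yS S x"] by auto
  qed
  show "(\<lambda>S. f (yS S x)) \<in> borel_measurable D"
    by (rule meas_fyS[OF id_D borel_measurable_const])
qed

lemma meas_gS_D: "gS x \<in> borel_measurable D"
  using meas_gS[OF id_D borel_measurable_const] by simp

lemma int_gS: "integrable D (gS x)"
proof (rule P.integrable_const_bound[where B="cg (norm (x - s))"])
  show "AE S in D. norm (gS x S) \<le> cg (norm (x - s))"
    using AE_good' by (rule eventually_mono) (rule good_g_bound)
qed (rule meas_gS_D)

lemma int_gS_sq: "integrable D (\<lambda>S. (norm (gS x S))^2)"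
proof (rule P.integrable_const_bound[where B="(cg (norm (x - s)))^2"])
  show "AE S in D. norm ((norm (gS x S))^2) \<le> (cg (norm (x - s)))^2"
    using AE_good' by (rule eventually_mono) (auto intro!: power_mono good_g_bound)
  show "(\<lambda>S. (norm (gS x S))^2) \<in> borel_measurable D"
    using meas_gS_D by measurable
qed

lemma ft_eq: "ft x = (\<integral>S. f (yS S x) \<partial>D)"
  unfolding f_tilde_def f_sketch_def yS_def ..

definition G where "G x = (\<integral>S. gS x S \<partial>D)"

end

context dsgd_setting begin

interpretation P: prob_space D by (rule D_prob)

lemma gS_inner: "gf (yS S x) \<bullet> (S *v h) = gS x S \<bullet> h"
  unfolding gS_def by (rule sym_dot)

lemma yS_add: "yS S (x + h) = yS S x + S *v h"
  unfolding yS_def by (simp add: matrix_vector_right_distrib algebra_simps)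

lemma f_yS_up: "f (yS S (x + h)) \<le> f (yS S x) + gS x S \<bullet> h + Lf / 2 * (norm (S *v h))^2"
  using f_up[of "yS S x" "S *v h"] unfolding yS_add gS_inner .

lemma ft_up: "ft (x + h) \<le> ft x + G x \<bullet> h + Lf * LD / 2 * (norm h)^2"
proof -
  have "ft (x + h) = (\<integral>S. f (yS S (x + h)) \<partial>D)" by (rule ft_eq)
  also have "\<dots> \<le> (\<integral>S. f (yS S x) + gS x S \<bullet> h + Lf / 2 * (norm (S *v h))^2 \<partial>D)"
    by (intro integral_mono f_yS_up int_fy Bochner_Integration.integrable_add
        integrable_inner_left int_gS integrable_mult_right int_sq)
  also have "\<dots> = ft x + G x \<bullet> h + Lf / 2 * (\<integral>S. (norm (S *v h))^2 \<partial>D)"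
    using int_fy int_gS int_sq
    by (simp add: ft_eq G_def integral_inner_left Bochner_Integration.integrable_add integrable_inner_left)
  also have "\<dots> \<le> ft x + G x \<bullet> h + Lf / 2 * (LD * (norm h)^2)"
    using E_sq_le[of h] Lf_pos by (intro add_left_mono mult_left_mono) auto
  finally show ?thesis by simp
qed

lemma fyS_deriv: "((\<lambda>z. f (yS S z)) has_derivative (\<lambda>h. gS x S \<bullet> h)) (at x)"
proof -
  have d1: "((\<lambda>z. yS S z) has_derivative (\<lambda>h. S *v h)) (at x)"
  proof -
    have "((\<lambda>z. z - s) has_derivative (\<lambda>h. h)) (at x)" by (intro derivative_eq_intros) auto
    then have "((\<lambda>z. S *v (z - s)) has_derivative (\<lambda>h. S *v h)) (at x)"
      by (rule bounded_linear.has_derivative[OF matrix_vector_mul_bounded_linear])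
    then have "((\<lambda>z. s + S *v (z - s)) has_derivative (\<lambda>h. 0 + S *v h)) (at x)"
      by (intro has_derivative_add has_derivative_const)
    then show ?thesis unfolding yS_def by simp
  qed
  have "((\<lambda>z. f (yS S z)) has_derivative (\<lambda>h. gf (yS S x) \<bullet> (S *v h))) (at x)"
    using has_derivative_compose[OF d1 gf_deriv] .
  then show ?thesis unfolding gS_inner .
qed

lemma good_Q_bound:
  assumes g: "good S" and z: "z \<noteq> x"
  shows "\<bar>(f (yS S z) - f (yS S x) - gS x S \<bullet> (z - x)) / norm (z - x)\<bar>
          \<le> norm (gS z S) + norm (gS x S) + Lf * Ls / 2 * norm (z - x)"
proof -
  define d where "d = z - x"
  have dn: "norm d > 0" using z unfolding d_def by simp
  have Sd: "(norm (S *v d))^2 \<le> Ls * (norm d)^2" using g unfolding good_def by blast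
  have up: "f (yS S z) - f (yS S x) - gS x S \<bullet> d \<le> Lf / 2 * (Ls * (norm d)^2)"
  proof -
    have "f (yS S z) \<le> f (yS S x) + gS x S \<bullet> d + Lf / 2 * (norm (S *v d))^2"
      using f_yS_up[of S x d] unfolding d_def by simp
    moreover have "Lf / 2 * (norm (S *v d))^2 \<le> Lf / 2 * (Ls * (norm d)^2)"
      using Sd Lf_pos by (intro mult_left_mono) auto
    ultimately show ?thesis by linarith
  qed
  have lo: "f (yS S z) - f (yS S x) - gS x S \<bullet> d \<ge> gS z S \<bullet> d - gS x S \<bullet> d - Lf / 2 * (Ls * (norm d)^2)"
  proof -
    have "f (yS S x) \<le> f (yS S z) + gS z S \<bullet> (- d) + Lf / 2 * (norm (S *v (- d)))^2"
      using f_yS_up[of S z "- d"] unfolding d_def by simp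
    moreover have "Lf / 2 * (norm (S *v (- d)))^2 \<le> Lf / 2 * (Ls * (norm d)^2)"
      using Sd Lf_pos by (intro mult_left_mono) (auto simp: matrix_vector_mult_diff_distrib[of S 0 d, simplified])
    ultimately show ?thesis by (simp add: inner_minus_right)
  qed
  have c1: "\<bar>gS z S \<bullet> d\<bar> \<le> norm (gS z S) * norm d" by (rule Cauchy_Schwarz_ineq2)
  have c2: "\<bar>gS x S \<bullet> d\<bar> \<le> norm (gS x S) * norm d" by (rule Cauchy_Schwarz_ineq2)
  have "\<bar>f (yS S z) - f (yS S x) - gS x S \<bullet> d\<bar>
      \<le> (norm (gS z S) + norm (gS x S) + Lf * Ls / 2 * norm d) * norm d"
    using up lo c1 c2 Lf_pos Ls_ge1 by (simp add: algebra_simps power2_eq_square abs_le_iff)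
  then have "\<bar>f (yS S z) - f (yS S x) - gS x S \<bullet> d\<bar> / norm d
      \<le> norm (gS z S) + norm (gS x S) + Lf * Ls / 2 * norm d"
    by (subst pos_divide_le_eq[OF dn])
  then show ?thesis unfolding d_def[symmetric] abs_divide abs_norm_cancel .
qed

lemma ft_deriv: "(ft has_derivative (\<lambda>h. G x \<bullet> h)) (at x)"
  unfolding has_derivative_iff_norm
proof (intro conjI)
  show "bounded_linear (\<lambda>h. G x \<bullet> h)" by (rule bounded_linear_inner_right)
  show "((\<lambda>y. norm (ft y - ft x - G x \<bullet> (y - x)) / norm (y - x)) \<longlongrightarrow> 0) (at x)"
    unfolding tendsto_at_iff_sequentially
  proof (intro allI impI)
    fix X :: "nat \<Rightarrow> real^'n" assume Xne: "\<forall>i. X i \<in> UNIV - {x}" and Xl: "X \<longlonglongrightarrow> x"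
    define Q where "Q m S = (f (yS S (X m)) - f (yS S x) - gS x S \<bullet> (X m - x)) / norm (X m - x)" for m S
    obtain K where K: "K > 0" "\<And>m. norm (X m) \<le> K"
      using convergent_imp_Bseq[OF convergentI[OF Xl]] by (auto simp: Bseq_def)
    define W where "W = cg (K + norm s) + cg (norm (x - s)) + Lf * Ls / 2 * (K + norm x)"
    have meQ: "Q m \<in> borel_measurable D" for m
      unfolding Q_def
      by (intro borel_measurable_divide borel_measurable_diff borel_measurable_inner
          meas_fyS[OF id_D] meas_gS_D borel_measurable_const)
    have lim: "AE S in D. (\<lambda>m. Q m S) \<longlonglongrightarrow> 0"
    proof (intro AE_I2)
      fix S
      have "((\<lambda>y. norm (f (yS S y) - f (yS S x) - gS x S \<bullet> (y - x)) / norm (y - x)) \<longlongrightarrow> 0) (at x)"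
        using fyS_deriv[of S x] by (simp add: has_derivative_iff_norm)
      then have "((\<lambda>y. norm (f (yS S y) - f (yS S x) - gS x S \<bullet> (y - x)) / norm (y - x)) \<circ> X) \<longlonglongrightarrow> 0"
        using Xne Xl unfolding tendsto_at_iff_sequentially by blast
      then have "(\<lambda>m. \<bar>Q m S\<bar>) \<longlonglongrightarrow> 0" unfolding Q_def comp_def by (simp add: abs_div_pos)
      then show "(\<lambda>m. Q m S) \<longlonglongrightarrow> 0" by (simp add: tendsto_rabs_zero_iff)
    qed
    have bnd: "AE S in D. norm (Q m S) \<le> W" for m
      using AE_good'
    proof (rule eventually_mono)
      fix S assume g: "good S"
      have ne: "X m \<noteq> x" using Xne by auto
      have n1: "norm (X m - s) \<le> K + norm s" using K(2)[of m] norm_triangle_ineq4[of "X m" s] by linarith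
      have n2: "norm (X m - x) \<le> K + norm x" using K(2)[of m] norm_triangle_ineq4[of "X m" x] by linarith
      have "norm (Q m S) \<le> norm (gS (X m) S) + norm (gS x S) + Lf * Ls / 2 * norm (X m - x)"
        unfolding Q_def real_norm_def by (rule good_Q_bound[OF g ne])
      also have "\<dots> \<le> W" unfolding W_def
        using good_g_bound[OF g, of "X m"] cg_mono[OF _ n1] good_g_bound[OF g, of x] n2 Lf_pos Ls_ge1
        by (intro add_mono mult_left_mono) auto
      finally show "norm (Q m S) \<le> W" .
    qed
    have "(\<lambda>m. \<integral>S. Q m S \<partial>D) \<longlonglongrightarrow> (\<integral>S. 0 \<partial>D)"
      by (rule integral_dominated_convergence[where w="\<lambda>_. W"])
         (use meQ lim bnd in auto)
    then have I0: "(\<lambda>m. \<integral>S. Q m S \<partial>D) \<longlonglongrightarrow> 0" by simp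
    have eq: "(\<integral>S. Q m S \<partial>D) = (ft (X m) - ft x - G x \<bullet> (X m - x)) / norm (X m - x)" for m
    proof -
      have "(\<integral>S. Q m S \<partial>D) = (\<integral>S. f (yS S (X m)) - f (yS S x) - gS x S \<bullet> (X m - x) \<partial>D) / norm (X m - x)"
        unfolding Q_def by (rule integral_divide_zero)
      also have "(\<integral>S. f (yS S (X m)) - f (yS S x) - gS x S \<bullet> (X m - x) \<partial>D)
          = ft (X m) - ft x - G x \<bullet> (X m - x)"
        using int_fy int_gS
        by (simp add: ft_eq G_def integral_inner_left Bochner_Integration.integral_diff
            Bochner_Integration.integrable_diff integrable_inner_left)
      finally show ?thesis .
    qed
    have "(\<lambda>m. \<bar>(ft (X m) - ft x - G x \<bullet> (X m - x)) / norm (X m - x)\<bar>) \<longlonglongrightarrow> 0"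
      using tendsto_rabs[OF I0] unfolding eq by simp
    then show "((\<lambda>y. norm (ft y - ft x - G x \<bullet> (y - x)) / norm (y - x)) \<circ> X) \<longlonglongrightarrow> 0"
      unfolding comp_def by (simp add: abs_div_pos)
  qed
qed

lemma grad_ft: "grad ft x = G x"
  unfolding grad_def
proof (rule the_equality)
  show "(ft has_derivative (\<lambda>h. G x \<bullet> h)) (at x)" by (rule ft_deriv)
  fix g assume "(ft has_derivative (\<lambda>h. g \<bullet> h)) (at x)"
  then have "(\<lambda>h. g \<bullet> h) = (\<lambda>h. G x \<bullet> h)" using ft_deriv has_derivative_unique by blast
  then have "g \<bullet> (g - G x) = G x \<bullet> (g - G x)" by metis
  then have "(g - G x) \<bullet> (g - G x) = 0" by (simp add: inner_diff_left)
  then show "g = G x" by simp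
qed

end

context dsgd_setting begin

interpretation P: prob_space D by (rule D_prob)

abbreviation "ftinf \<equiv> Inf (range ft)"

lemma ft_ge: "finf \<le> ft x"
proof -
  have "(\<integral>S. finf \<partial>D) \<le> (\<integral>S. f (yS S x) \<partial>D)"
    by (intro integral_mono int_fy P.integrable_const f_ge)
  then show ?thesis by (simp add: ft_eq P.prob_space)
qed

lemma bdd_ft: "bdd_below (range ft)"
  using ft_ge by (intro bdd_belowI[of _ finf]) auto

lemma ftinf_le: "ftinf \<le> ft x"
  using bdd_ft by (simp add: cInf_lower)

lemma E_gS_sq: "(\<integral>S. (norm (gS x S))^2 \<partial>D) \<le> 2 * Lf * Ls * (ft x - finf)"
proof -
  have "(\<integral>S. (norm (gS x S))^2 \<partial>D) \<le> (\<integral>S. 2 * Lf * Ls * (f (yS S x) - finf) \<partial>D)"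
  proof (rule integral_mono_AE)
    show "integrable D (\<lambda>S. (norm (gS x S))^2)" by (rule int_gS_sq)
    show "integrable D (\<lambda>S. 2 * Lf * Ls * (f (yS S x) - finf))"
      by (intro integrable_mult_right Bochner_Integration.integrable_diff int_fy P.integrable_const)
    show "AE S in D. (norm (gS x S))^2 \<le> 2 * Lf * Ls * (f (yS S x) - finf)"
      using AE_good'
    proof (rule eventually_mono)
      fix S assume g: "good S"
      have "(norm (gS x S))^2 \<le> (sqrt Ls * norm (gf (yS S x)))^2"
        unfolding gS_def by (rule power_mono[OF good_normT[OF g]]) simp
      also have "\<dots> = Ls * (norm (gf (yS S x)))^2" using Ls_ge1 by (simp add: power_mult_distrib)
      also have "\<dots> \<le> Ls * (2 * Lf * (f (yS S x) - finf))"
        using Ls_ge1 by (intro mult_left_mono gf_bound) auto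
      finally show "(norm (gS x S))^2 \<le> 2 * Lf * Ls * (f (yS S x) - finf)" by (simp add: algebra_simps)
    qed
  qed
  also have "\<dots> = 2 * Lf * Ls * (ft x - finf)"
    using int_fy by (simp add: ft_eq P.prob_space Bochner_Integration.integral_diff)
  finally show ?thesis .
qed

lemma descent:
  assumes gam: "\<gamma> \<ge> 0"
  defines "c \<equiv> (Lf * LD) * (Lf * Ls) * \<gamma>^2"
  shows "(\<integral>\<^sup>+S. ennreal (ft (x - \<gamma> *\<^sub>R gS x S) - ftinf) \<partial>D) + ennreal (\<gamma> * (norm (G x))^2)
         \<le> ennreal ((1 + c) * (ft x - ftinf) + c * (ftinf - finf))"
proof -
  define Lt where "Lt = Lf * LD"
  define RHS where "RHS S = ft x - \<gamma> * (G x \<bullet> gS x S) + Lt / 2 * \<gamma>^2 * (norm (gS x S))^2 - ftinf" for S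
  have pt: "ft (x - \<gamma> *\<^sub>R gS x S) - ftinf \<le> RHS S" for S
  proof -
    have "ft (x + (- \<gamma>) *\<^sub>R gS x S) \<le> ft x + G x \<bullet> ((- \<gamma>) *\<^sub>R gS x S) + Lf * LD / 2 * (norm ((- \<gamma>) *\<^sub>R gS x S))^2"
      by (rule ft_up)
    then show ?thesis unfolding RHS_def Lt_def by (simp add: power_mult_distrib)
  qed
  have intR: "integrable D RHS"
    unfolding RHS_def
    by (intro Bochner_Integration.integrable_diff Bochner_Integration.integrable_add
        P.integrable_const integrable_mult_right integrable_inner_right int_gS int_gS_sq)
  have RHS_nn: "0 \<le> RHS S" for S using pt[of S] ftinf_le[of "x - \<gamma> *\<^sub>R gS x S"] by linarith
  have IR: "(\<integral>S. RHS S \<partial>D) = ft x - \<gamma> * (norm (G x))^2 + Lt / 2 * \<gamma>^2 * (\<integral>S. (norm (gS x S))^2 \<partial>D) - ftinf"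
    unfolding RHS_def using int_gS int_gS_sq
    by (simp add: Bochner_Integration.integral_diff Bochner_Integration.integral_add
        Bochner_Integration.integrable_diff Bochner_Integration.integrable_add integrable_mult_right
        integrable_inner_right integral_inner_right G_def[symmetric] P.prob_space power2_norm_eq_inner)
  have Lt0: "Lt \<ge> 0" unfolding Lt_def using Lf_pos LD_ge1 by simp
  have "Lt / 2 * \<gamma>^2 * (\<integral>S. (norm (gS x S))^2 \<partial>D) \<le> Lt / 2 * \<gamma>^2 * (2 * Lf * Ls * (ft x - finf))"
    using E_gS_sq[of x] Lt0 by (intro mult_left_mono) auto
  also have "\<dots> = c * (ft x - finf)" unfolding c_def Lt_def by (simp add: algebra_simps)
  finally have IRle: "(\<integral>S. RHS S \<partial>D) \<le> (ft x - ftinf) - \<gamma> * (norm (G x))^2 + c * ((ft x - ftinf) + (ftinf - finf))"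
    unfolding IR by simp
  have "(\<integral>\<^sup>+S. ennreal (ft (x - \<gamma> *\<^sub>R gS x S) - ftinf) \<partial>D) \<le> (\<integral>\<^sup>+S. ennreal (RHS S) \<partial>D)"
    by (intro nn_integral_mono ennreal_leI pt)
  also have "\<dots> = ennreal (\<integral>S. RHS S \<partial>D)"
    by (rule nn_integral_eq_integral[OF intR]) (simp add: RHS_nn)
  also have "\<dots> \<le> ennreal ((ft x - ftinf) - \<gamma> * (norm (G x))^2 + c * ((ft x - ftinf) + (ftinf - finf)))"
    using IRle by (rule ennreal_leI)
  finally have A: "(\<integral>\<^sup>+S. ennreal (ft (x - \<gamma> *\<^sub>R gS x S) - ftinf) \<partial>D)
     \<le> ennreal ((ft x - ftinf) - \<gamma> * (norm (G x))^2 + c * ((ft x - ftinf) + (ftinf - finf)))" .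
  have nn1: "0 \<le> (ft x - ftinf) - \<gamma> * (norm (G x))^2 + c * ((ft x - ftinf) + (ftinf - finf))"
    using IRle integral_nonneg_AE[of RHS D] RHS_nn by (smt (verit) AE_I2)
  have nn2: "0 \<le> \<gamma> * (norm (G x))^2" using gam by simp
  have "(\<integral>\<^sup>+S. ennreal (ft (x - \<gamma> *\<^sub>R gS x S) - ftinf) \<partial>D) + ennreal (\<gamma> * (norm (G x))^2)
     \<le> ennreal ((ft x - ftinf) - \<gamma> * (norm (G x))^2 + c * ((ft x - ftinf) + (ftinf - finf))) + ennreal (\<gamma> * (norm (G x))^2)"
    using A by (rule add_right_mono)
  also have "\<dots> = ennreal ((ft x - ftinf) - \<gamma> * (norm (G x))^2 + c * ((ft x - ftinf) + (ftinf - finf)) + \<gamma> * (norm (G x))^2)"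
    using nn1 nn2 by (rule ennreal_plus[symmetric])
  also have "\<dots> = ennreal ((1 + c) * (ft x - ftinf) + c * (ftinf - finf))"
    by (simp add: algebra_simps)
  finally show ?thesis .
qed

end

context dsgd_setting begin

interpretation P: prob_space D by (rule D_prob)

interpretation PS: product_prob_space "\<lambda>_::nat. D" UNIV
proof -
  have "sigma_finite_measure D" by (rule prob_space_imp_sigma_finite[OF D_prob])
  then show "product_prob_space (\<lambda>_::nat. D)"
    unfolding product_prob_space_def product_prob_space_axioms_def product_sigma_finite_def
    using D_prob by blast
qed

abbreviation "PP \<equiv> PiM (UNIV :: nat set) (\<lambda>_. D)"

lemma dsgd_Suc': "dsgd gf s \<gamma> x0 \<omega> (Suc t) = dsgd gf s \<gamma> x0 \<omega> t - \<gamma> *\<^sub>R gS (dsgd gf s \<gamma> x0 \<omega> t) (\<omega> t)"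
  by (simp add: gS_def yS_def)

lemma dsgd_cong: "(\<And>i. i < t \<Longrightarrow> \<omega> i = \<omega>' i) \<Longrightarrow> dsgd gf s \<gamma> x0 \<omega> t = dsgd gf s \<gamma> x0 \<omega>' t"
  by (induction t) (simp_all del: dsgd.simps add: dsgd_Suc' dsgd.simps(1))

lemma meas_dsgd: "{..<t} \<subseteq> I \<Longrightarrow> (\<lambda>\<omega>. dsgd gf s \<gamma> x0 \<omega> t) \<in> borel_measurable (PiM I (\<lambda>_. D))"
proof (induction t)
  case 0 then show ?case by simp
next
  case (Suc t)
  then have tI: "t \<in> I" and sub: "{..<t} \<subseteq> I" by auto
  have comp: "(\<lambda>\<omega>. \<omega> t) \<in> borel_measurable (PiM I (\<lambda>_. D))"
    using measurable_compose[OF measurable_component_singleton[OF tI] id_D] .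
  show ?case unfolding dsgd_Suc'
    by (intro borel_measurable_diff borel_measurable_scaleR borel_measurable_const
        meas_gS[OF comp] Suc.IH[OF sub])
qed

lemma lift:
  assumes J: "finite J" "{..<k} \<subseteq> J" and F: "F \<in> borel_measurable borel"
  shows "(\<integral>\<^sup>+\<omega>. F (dsgd gf s \<gamma> x0 \<omega> k) \<partial>PP) = (\<integral>\<^sup>+y. F (dsgd gf s \<gamma> x0 y k) \<partial>PiM J (\<lambda>_. D))"
proof -
  have mF: "(\<lambda>y. F (dsgd gf s \<gamma> x0 y k)) \<in> borel_measurable (PiM J (\<lambda>_. D))"
    using measurable_compose[OF meas_dsgd[OF J(2)] F] .
  have "(\<integral>\<^sup>+y. F (dsgd gf s \<gamma> x0 y k) \<partial>PiM J (\<lambda>_. D))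
      = (\<integral>\<^sup>+y. F (dsgd gf s \<gamma> x0 y k) \<partial>distr PP (PiM J (\<lambda>_. D)) (\<lambda>\<omega>. restrict \<omega> J))"
    using PS.distr_PiM_restrict_finite[OF J(1)] by simp
  also have "\<dots> = (\<integral>\<^sup>+\<omega>. F (dsgd gf s \<gamma> x0 (restrict \<omega> J) k) \<partial>PP)"
  proof (rule nn_integral_distr)
    show "(\<lambda>\<omega>. restrict \<omega> J) \<in> PP \<rightarrow>\<^sub>M PiM J (\<lambda>_. D)" by (rule measurable_restrict_subset) simp
    show "(\<lambda>y. F (dsgd gf s \<gamma> x0 y k)) \<in> borel_measurable (distr PP (PiM J (\<lambda>_. D)) (\<lambda>\<omega>. restrict \<omega> J))"
      using mF by simp
  qed
  also have "\<dots> = (\<integral>\<^sup>+\<omega>. F (dsgd gf s \<gamma> x0 \<omega> k) \<partial>PP)"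
    using J(2) by (intro nn_integral_cong arg_cong[where f=F] dsgd_cong) auto
  finally show ?thesis by simp
qed

lemma step_nn:
  assumes h: "h \<in> borel_measurable borel"
  shows "(\<integral>\<^sup>+\<omega>. h (dsgd gf s \<gamma> x0 \<omega> (Suc t)) \<partial>PP)
       = (\<integral>\<^sup>+\<omega>. (\<integral>\<^sup>+S. h (dsgd gf s \<gamma> x0 \<omega> t - \<gamma> *\<^sub>R gS (dsgd gf s \<gamma> x0 \<omega> t) S) \<partial>D) \<partial>PP)"
proof -
  define \<Phi> where "\<Phi> z = (\<integral>\<^sup>+S. h (z - \<gamma> *\<^sub>R gS z S) \<partial>D)" for z
  have mpair: "(\<lambda>p. h (fst p - \<gamma> *\<^sub>R gS (fst p) (snd p))) \<in> borel_measurable (borel \<Otimes>\<^sub>M D)"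
  proof -
    have sn: "(\<lambda>p. snd p) \<in> borel_measurable (borel \<Otimes>\<^sub>M D)"
      using measurable_compose[OF measurable_snd id_D] .
    have fs: "(\<lambda>p. fst p) \<in> borel_measurable (borel \<Otimes>\<^sub>M D)" by (rule measurable_fst)
    show ?thesis
      by (intro measurable_compose[OF _ h] borel_measurable_diff borel_measurable_scaleR
          borel_measurable_const meas_gS[OF sn fs] fs)
  qed
  have mPhi: "\<Phi> \<in> borel_measurable borel"
    unfolding \<Phi>_def using P.borel_measurable_nn_integral[of "\<lambda>z S. h (z - \<gamma> *\<^sub>R gS z S)" borel] mpair
    by (simp add: case_prod_beta')
  have fin: "finite {..<t}" "t \<notin> {..<t}" by auto
  have ins: "insert t {..<t} = {..<Suc t}" by auto
  have "(\<integral>\<^sup>+\<omega>. h (dsgd gf s \<gamma> x0 \<omega> (Suc t)) \<partial>PP)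
      = (\<integral>\<^sup>+y. h (dsgd gf s \<gamma> x0 y (Suc t)) \<partial>PiM (insert t {..<t}) (\<lambda>_. D))"
    by (rule lift) (use h in auto)
  also have "\<dots> = (\<integral>\<^sup>+y. (\<integral>\<^sup>+S. h (dsgd gf s \<gamma> x0 (y(t := S)) (Suc t)) \<partial>D) \<partial>PiM {..<t} (\<lambda>_. D))"
    by (rule PS.product_nn_integral_insert[OF fin measurable_compose[OF meas_dsgd h]]) auto
  also have "\<dots> = (\<integral>\<^sup>+y. \<Phi> (dsgd gf s \<gamma> x0 y t) \<partial>PiM {..<t} (\<lambda>_. D))"
  proof (rule nn_integral_cong)
    fix y
    have e: "dsgd gf s \<gamma> x0 (y(t := S)) t = dsgd gf s \<gamma> x0 y t" for S
      by (rule dsgd_cong) auto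
    show "(\<integral>\<^sup>+S. h (dsgd gf s \<gamma> x0 (y(t := S)) (Suc t)) \<partial>D) = \<Phi> (dsgd gf s \<gamma> x0 y t)"
      unfolding \<Phi>_def dsgd_Suc' e by simp
  qed
  also have "\<dots> = (\<integral>\<^sup>+\<omega>. \<Phi> (dsgd gf s \<gamma> x0 \<omega> t) \<partial>PP)"
    by (rule lift[symmetric]) (use mPhi in auto)
  finally show ?thesis unfolding \<Phi>_def .
qed

end

context dsgd_setting begin

interpretation P: prob_space D by (rule D_prob)

interpretation PS: product_prob_space "\<lambda>_::nat. D" UNIV
proof -
  have "sigma_finite_measure D" by (rule prob_space_imp_sigma_finite[OF D_prob])
  then show "product_prob_space (\<lambda>_::nat. D)"
    unfolding product_prob_space_def product_prob_space_axioms_def product_sigma_finite_def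
    using D_prob by blast
qed

lemma meas_Phi:
  assumes h: "h \<in> borel_measurable borel"
  shows "(\<lambda>z. \<integral>\<^sup>+S. h (z - \<gamma> *\<^sub>R gS z S) \<partial>D) \<in> borel_measurable borel"
proof -
  have mpair: "(\<lambda>p. h (fst p - \<gamma> *\<^sub>R gS (fst p) (snd p))) \<in> borel_measurable (borel \<Otimes>\<^sub>M D)"
  proof -
    have sn: "(\<lambda>p. snd p) \<in> borel_measurable (borel \<Otimes>\<^sub>M D)"
      using measurable_compose[OF measurable_snd id_D] .
    have fs: "(\<lambda>p. fst p) \<in> borel_measurable (borel \<Otimes>\<^sub>M D)" by (rule measurable_fst)
    show ?thesis
      by (intro measurable_compose[OF _ h] borel_measurable_diff borel_measurable_scaleR
          borel_measurable_const meas_gS[OF sn fs] fs)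
  qed
  then show ?thesis
    using P.borel_measurable_nn_integral[of "\<lambda>z S. h (z - \<gamma> *\<^sub>R gS z S)" borel]
    by (simp add: case_prod_beta')
qed

lemma meas_ft: "ft \<in> borel_measurable borel"
proof -
  have "continuous_on UNIV ft"
    using ft_deriv has_derivative_continuous by (metis continuous_at_imp_continuous_on)
  then show ?thesis by (rule borel_measurable_continuous_onI)
qed

lemma meas_G: "G \<in> borel_measurable borel"
  by (rule deriv_meas[OF ft_deriv])

lemma recursion:
  assumes gam: "\<gamma> \<ge> 0"
  defines "c \<equiv> (Lf * LD) * (Lf * Ls) * \<gamma>^2"
  shows "(\<integral>\<^sup>+\<omega>. ennreal (ft (dsgd gf s \<gamma> x0 \<omega> (Suc t)) - ftinf) \<partial>PP)
          + ennreal \<gamma> * (\<integral>\<^sup>+\<omega>. ennreal ((norm (G (dsgd gf s \<gamma> x0 \<omega> t)))^2) \<partial>PP)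
         \<le> ennreal (1 + c) * (\<integral>\<^sup>+\<omega>. ennreal (ft (dsgd gf s \<gamma> x0 \<omega> t) - ftinf) \<partial>PP)
           + ennreal (c * (ftinf - finf))"
proof -
  let ?X = "\<lambda>\<omega>. dsgd gf s \<gamma> x0 \<omega> t"
  define h where "h z = ennreal (ft z - ftinf)" for z
  define \<Phi> where "\<Phi> z = (\<integral>\<^sup>+S. h (z - \<gamma> *\<^sub>R gS z S) \<partial>D)" for z
  have mh: "h \<in> borel_measurable borel" unfolding h_def using meas_ft by measurable
  have mX: "?X \<in> borel_measurable PP" by (rule meas_dsgd) simp
  have mPhi: "(\<lambda>\<omega>. \<Phi> (?X \<omega>)) \<in> borel_measurable PP"
    unfolding \<Phi>_def by (rule measurable_compose[OF mX meas_Phi[OF mh]])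
  have mGX: "(\<lambda>\<omega>. ennreal ((norm (G (?X \<omega>)))^2)) \<in> borel_measurable PP"
    using measurable_compose[OF mX meas_G] by measurable
  have mhX: "(\<lambda>\<omega>. h (?X \<omega>)) \<in> borel_measurable PP"
    using measurable_compose[OF mX mh] .
  have c0: "c \<ge> 0" unfolding c_def using Lf_pos LD_ge1 Ls_ge1 by simp
  have D0: "ftinf - finf \<ge> 0" using Delta_pos by simp
  have "(\<integral>\<^sup>+\<omega>. ennreal (ft (dsgd gf s \<gamma> x0 \<omega> (Suc t)) - ftinf) \<partial>PP) = (\<integral>\<^sup>+\<omega>. \<Phi> (?X \<omega>) \<partial>PP)"
    using step_nn[OF mh, of \<gamma> x0 t] unfolding h_def \<Phi>_def .
  moreover have "ennreal \<gamma> * (\<integral>\<^sup>+\<omega>. ennreal ((norm (G (?X \<omega>)))^2) \<partial>PP)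
      = (\<integral>\<^sup>+\<omega>. ennreal (\<gamma> * (norm (G (?X \<omega>)))^2) \<partial>PP)"
    using gam by (simp add: nn_integral_cmult[OF mGX, symmetric] ennreal_mult)
  ultimately have "(\<integral>\<^sup>+\<omega>. ennreal (ft (dsgd gf s \<gamma> x0 \<omega> (Suc t)) - ftinf) \<partial>PP)
          + ennreal \<gamma> * (\<integral>\<^sup>+\<omega>. ennreal ((norm (G (?X \<omega>)))^2) \<partial>PP)
      = (\<integral>\<^sup>+\<omega>. \<Phi> (?X \<omega>) + ennreal (\<gamma> * (norm (G (?X \<omega>)))^2) \<partial>PP)"
    using mPhi mGX gam by (simp add: nn_integral_add ennreal_mult measurable_compose[OF mX meas_G])
  also have "\<dots> \<le> (\<integral>\<^sup>+\<omega>. ennreal ((1 + c) * (ft (?X \<omega>) - ftinf) + c * (ftinf - finf)) \<partial>PP)"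
    by (intro nn_integral_mono) (unfold \<Phi>_def h_def c_def, rule descent[OF gam])
  also have "\<dots> = (\<integral>\<^sup>+\<omega>. ennreal (1 + c) * h (?X \<omega>) + ennreal (c * (ftinf - finf)) \<partial>PP)"
  proof (intro nn_integral_cong)
    fix \<omega>
    have r0: "0 \<le> ft (?X \<omega>) - ftinf" using ftinf_le by simp
    have "ennreal ((1 + c) * (ft (?X \<omega>) - ftinf) + c * (ftinf - finf))
        = ennreal ((1 + c) * (ft (?X \<omega>) - ftinf)) + ennreal (c * (ftinf - finf))"
      using c0 r0 D0 by (intro ennreal_plus) auto
    also have "ennreal ((1 + c) * (ft (?X \<omega>) - ftinf)) = ennreal (1 + c) * h (?X \<omega>)"
      unfolding h_def using c0 r0 by (intro ennreal_mult) auto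
    finally show "ennreal ((1 + c) * (ft (?X \<omega>) - ftinf) + c * (ftinf - finf))
        = ennreal (1 + c) * h (?X \<omega>) + ennreal (c * (ftinf - finf))" .
  qed
  also have "\<dots> = (\<integral>\<^sup>+\<omega>. ennreal (1 + c) * h (?X \<omega>) \<partial>PP) + (\<integral>\<^sup>+\<omega>. ennreal (c * (ftinf - finf)) \<partial>PP)"
    by (rule nn_integral_add) (use mhX in auto)
  also have "\<dots> = ennreal (1 + c) * (\<integral>\<^sup>+\<omega>. h (?X \<omega>) \<partial>PP) + ennreal (c * (ftinf - finf))"
    by (simp only: nn_integral_cmult[OF mhX] nn_integral_const PS.emeasure_space_1 mult_1_right)
  finally show ?thesis unfolding h_def .
qed

end

context dsgd_setting begin

interpretation PS: product_prob_space "\<lambda>_::nat. D" UNIV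
proof -
  have "sigma_finite_measure D" by (rule prob_space_imp_sigma_finite[OF D_prob])
  then show "product_prob_space (\<lambda>_::nat. D)"
    unfolding product_prob_space_def product_prob_space_axioms_def product_sigma_finite_def
    using D_prob by blast
qed

lemma pow_exp_bound:
  fixes c :: real assumes "c \<ge> 0" "c * T \<le> 1"
  shows "(1 + c) ^ T \<le> 3"
proof -
  have "(1 + c) ^ T \<le> (exp c) ^ T"
    using assms by (intro power_mono) auto
  also have "\<dots> = exp (real T * c)" by (simp add: exp_of_nat_mult)
  also have "\<dots> \<le> exp 1" using assms by (simp add: mult.commute)
  also have "\<dots> \<le> 3" by (rule exp_le)
  finally show ?thesis .
qed

lemma real_rec:
  fixes \<rho> :: "nat \<Rightarrow> real" and c a d0 :: real
  assumes c: "c \<ge> 0" and a: "a \<ge> 0" and r0: "\<rho> 0 = d0"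
    and step: "\<And>t. t < T \<Longrightarrow> \<rho> (Suc t) \<le> (1 + c) * \<rho> t - a"
  shows "t \<le> T \<Longrightarrow> \<rho> t \<le> (1 + c)^t * d0 - a * t"
proof (induction t)
  case 0 then show ?case using r0 by simp
next
  case (Suc t)
  then have "\<rho> t \<le> (1 + c)^t * d0 - a * t" by simp
  then have "(1 + c) * \<rho> t \<le> (1 + c) * ((1 + c)^t * d0 - a * t)" using c by (intro mult_left_mono) auto
  moreover have "(1 + c) * ((1 + c)^t * d0 - a * t) - a \<le> (1 + c)^(Suc t) * d0 - a * Suc t"
    using c a by (simp add: algebra_simps)
  ultimately show ?case using step[of t] Suc.prems by simp
qed

lemma main:
  fixes \<epsilon> \<gamma> :: real and T :: nat and x0
  assumes eps: "\<epsilon> > 0" and T_pos: "T > 0"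
    and T_bound: "real T \<ge> 12 * (ft x0 - ftinf) * (Lf * sqrt (LD * Ls))\<^sup>2 / \<epsilon> ^ 4
                     * max (3 * (ft x0 - ftinf)) (ftinf - finf)"
    and gamma: "\<gamma> = min (1 / (Lf * sqrt (LD * Ls) * sqrt (real T)))
                        (\<epsilon>\<^sup>2 / (2 * (Lf * sqrt (LD * Ls))\<^sup>2 * (ftinf - finf)))"
  shows "Min ((\<lambda>t. \<integral>\<^sup>+ \<omega>. ennreal ((norm (grad ft (dsgd gf s \<gamma> x0 \<omega> t)))\<^sup>2) \<partial>PP) ` {..<T})
           \<le> ennreal (\<epsilon>\<^sup>2)"
proof (rule ccontr)
  define Dd where "Dd = Lf * sqrt (LD * Ls)"
  define \<Delta> where "\<Delta> = ftinf - finf"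
  define d0 where "d0 = ft x0 - ftinf"
  define c where "c = (Lf * LD) * (Lf * Ls) * \<gamma>^2"
  define R where "R t = (\<integral>\<^sup>+\<omega>. ennreal (ft (dsgd gf s \<gamma> x0 \<omega> t) - ftinf) \<partial>PP)" for t
  define M where "M t = (\<integral>\<^sup>+\<omega>. ennreal ((norm (G (dsgd gf s \<gamma> x0 \<omega> t)))^2) \<partial>PP)" for t
  have Dd: "Dd > 0" unfolding Dd_def using Lf_pos LD_ge1 Ls_ge1 by simp
  have Dd2: "Dd^2 = (Lf * LD) * (Lf * Ls)"
    unfolding Dd_def using LD_ge1 Ls_ge1 by (simp add: power_mult_distrib power2_eq_square)
  have Del: "\<Delta> > 0" unfolding \<Delta>_def using Delta_pos by simp
  have d0: "d0 \<ge> 0" unfolding d0_def using ftinf_le by simp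
  have sT: "sqrt (real T) > 0" using T_pos by simp
  have g1: "\<gamma> \<le> 1 / (Dd * sqrt (real T))" unfolding gamma Dd_def by simp
  have g2: "\<gamma> \<le> \<epsilon>^2 / (2 * Dd^2 * \<Delta>)" unfolding gamma Dd_def \<Delta>_def by simp
  have gpos: "\<gamma> > 0" unfolding gamma using Dd sT Del eps unfolding Dd_def[symmetric] \<Delta>_def[symmetric]
    by simp
  have c_eq: "c = Dd^2 * \<gamma>^2" unfolding c_def Dd2 ..
  have c0: "c \<ge> 0" unfolding c_eq by simp
  have cT: "c * T \<le> 1"
  proof -
    have "\<gamma> * (Dd * sqrt (real T)) \<le> 1" using g1 Dd sT by (simp add: field_simps)
    then have "(\<gamma> * (Dd * sqrt (real T)))^2 \<le> 1^2" using gpos Dd sT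
      by (intro power_mono) auto
    then show ?thesis unfolding c_eq by (simp add: power_mult_distrib algebra_simps)
  qed
  have cD: "c * \<Delta> \<le> \<gamma> * \<epsilon>^2 / 2"
  proof -
    have "\<gamma> * (2 * Dd^2 * \<Delta>) \<le> \<epsilon>^2" using g2 Dd Del by (simp add: field_simps)
    then have "\<gamma> * (\<gamma> * (2 * Dd^2 * \<Delta>)) \<le> \<gamma> * \<epsilon>^2" using gpos by (intro mult_left_mono) auto
    then show ?thesis unfolding c_eq by (simp add: power2_eq_square algebra_simps)
  qed
  assume "\<not> ?thesis"
  then have less: "ennreal (\<epsilon>^2) < Min (M ` {..<T})"
    unfolding M_def grad_ft by simp
  have fin: "finite (M ` {..<T})" "M ` {..<T} \<noteq> {}" using T_pos by auto
  obtain z where z: "ennreal (\<epsilon>^2) < z" "z < Min (M ` {..<T})" using dense[OF less] by blast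
  have ztop: "z < top" using z(2) top.not_eq_extremum by fastforce
  define \<mu> where "\<mu> = enn2real z"
  have zmu: "z = ennreal \<mu>" unfolding \<mu>_def using ztop by simp
  have mu: "\<epsilon>^2 < \<mu>" using z(1) unfolding zmu by (simp add: ennreal_less_iff)
  have Mge: "ennreal \<mu> \<le> M t" if "t < T" for t
  proof -
    have "Min (M ` {..<T}) \<le> M t" using Min_le[OF fin(1), of "M t"] that by auto
    then show ?thesis using z(2) unfolding zmu by simp
  qed
  have rec: "R (Suc t) + ennreal \<gamma> * M t \<le> ennreal (1 + c) * R t + ennreal (c * \<Delta>)" for t
    unfolding R_def M_def c_def \<Delta>_def using recursion[of \<gamma> x0 t] gpos by simp
  have R0: "R 0 = ennreal d0"
    unfolding R_def d0_def by (simp add: PS.emeasure_space_1)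
  have Rfin: "R t < top" for t
  proof (induction t)
    case 0 then show ?case using R0 by simp
  next
    case (Suc t)
    have "R (Suc t) \<le> R (Suc t) + ennreal \<gamma> * M t" by simp
    also have "\<dots> \<le> ennreal (1 + c) * R t + ennreal (c * \<Delta>)" by (rule rec)
    also have "\<dots> < top" using Suc.IH by (simp add: ennreal_mult_less_top)
    finally show ?case .
  qed
  define \<rho> where "\<rho> t = enn2real (R t)" for t
  have R\<rho>: "R t = ennreal (\<rho> t)" for t unfolding \<rho>_def using Rfin[of t] by simp
  have \<rho>0: "\<rho> t \<ge> 0" for t unfolding \<rho>_def by simp
  define a where "a = \<gamma> * \<mu> - c * \<Delta>"
  have a_gt: "a > \<gamma> * \<epsilon>^2 / 2"
  proof -
    have "\<gamma> * \<epsilon>^2 < \<gamma> * \<mu>" using mu gpos by simp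
    then show ?thesis unfolding a_def using cD by simp
  qed
  have "\<gamma> * \<epsilon>^2 / 2 \<ge> 0" using gpos by simp
  then have a0: "a \<ge> 0" using a_gt by linarith
  have step: "\<rho> (Suc t) \<le> (1 + c) * \<rho> t - a" if t: "t < T" for t
  proof -
    have mu0: "\<mu> \<ge> 0" using mu zero_le_power2[of \<epsilon>] by linarith
    have e1: "ennreal (\<rho> (Suc t) + \<gamma> * \<mu>) = ennreal (\<rho> (Suc t)) + ennreal (\<gamma> * \<mu>)"
      using \<rho>0 gpos mu0 by (intro ennreal_plus) auto
    have e2: "ennreal (\<gamma> * \<mu>) = ennreal \<gamma> * ennreal \<mu>"
      using gpos mu0 by (intro ennreal_mult) auto
    have "ennreal (\<rho> (Suc t) + \<gamma> * \<mu>) = ennreal (\<rho> (Suc t)) + ennreal \<gamma> * ennreal \<mu>"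
      unfolding e1 e2 ..
    also have "\<dots> \<le> R (Suc t) + ennreal \<gamma> * M t"
      unfolding R\<rho> by (intro add_left_mono mult_left_mono Mge t) auto
    also have "\<dots> \<le> ennreal (1 + c) * R t + ennreal (c * \<Delta>)" by (rule rec)
    also have "\<dots> = ennreal ((1 + c) * \<rho> t + c * \<Delta>)"
      unfolding R\<rho> using c0 \<rho>0[of t] Del by (simp add: ennreal_mult ennreal_plus)
    finally have "\<rho> (Suc t) + \<gamma> * \<mu> \<le> (1 + c) * \<rho> t + c * \<Delta>"
      using c0 \<rho>0[of t] Del by (subst (asm) ennreal_le_iff) auto
    then show ?thesis unfolding a_def by simp
  qed
  have "\<rho> 0 = d0" using R0 d0 unfolding \<rho>_def by simp
  from real_rec[of c a \<rho> d0 T, OF c0 a0 this step] have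
    "\<rho> T \<le> (1 + c)^T * d0 - a * T" by simp
  moreover have "(1 + c)^T * d0 \<le> 3 * d0" using pow_exp_bound[OF c0 cT] d0 by (intro mult_right_mono)
  ultimately have "a * T \<le> 3 * d0" using \<rho>0[of T] by simp
  moreover have "\<gamma> * \<epsilon>^2 / 2 * T < a * T" using a_gt T_pos by simp
  ultimately have key: "\<gamma> * \<epsilon>^2 * T < 6 * d0" by simp
  have TB: "real T \<ge> 12 * d0 * Dd^2 / \<epsilon>^4 * max (3 * d0) \<Delta>"
    using T_bound unfolding d0_def Dd_def \<Delta>_def .
  have e4: "\<epsilon>^4 > 0" using eps by simp
  show False
  proof (cases "1 / (Dd * sqrt (real T)) \<le> \<epsilon>^2 / (2 * Dd^2 * \<Delta>)")
    case True
    then have gam: "\<gamma> = 1 / (Dd * sqrt (real T))" unfolding gamma Dd_def \<Delta>_def by simp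
    have "real T = sqrt (real T) * sqrt (real T)" by simp
    then have hT: "\<gamma> * T = sqrt (real T) / Dd" unfolding gam using sT Dd by (simp add: field_simps)
    have "\<gamma> * \<epsilon>^2 * T = \<epsilon>^2 * (\<gamma> * T)" by (simp add: algebra_simps)
    also have "\<dots> = \<epsilon>^2 * sqrt (real T) / Dd" unfolding hT by simp
    finally have "\<epsilon>^2 * sqrt (real T) / Dd < 6 * d0" using key by simp
    then have A: "\<epsilon>^2 * sqrt (real T) < 6 * d0 * Dd" using Dd by (simp add: divide_less_eq)
    have "(\<epsilon>^2 * sqrt (real T))^2 < (6 * d0 * Dd)^2"
      using A eps sT by (intro power_strict_mono) auto
    moreover have "(\<epsilon>^2 * sqrt (real T))^2 = \<epsilon>^4 * T"
      by (simp add: power_mult_distrib power_mult[symmetric])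
    moreover have "(6 * d0 * Dd)^2 = 36 * d0^2 * Dd^2" by (simp add: power_mult_distrib)
    ultimately have B: "\<epsilon>^4 * T < 36 * d0^2 * Dd^2" by simp
    have "12 * d0 * Dd^2 / \<epsilon>^4 * (3 * d0) \<le> real T"
      using TB d0 Dd e4 by (smt (verit) divide_nonneg_nonneg max.cobounded1 mult_left_mono mult_nonneg_nonneg zero_le_power2)
    then have "36 * d0^2 * Dd^2 \<le> \<epsilon>^4 * T" using e4 by (simp add: field_simps power2_eq_square)
    then show False using B by simp
  next
    case False
    then have gam: "\<gamma> = \<epsilon>^2 / (2 * Dd^2 * \<Delta>)" unfolding gamma Dd_def \<Delta>_def by simp
    have "\<epsilon>^2 / (2 * Dd^2 * \<Delta>) * \<epsilon>^2 * T < 6 * d0" using key unfolding gam .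
    then have B: "\<epsilon>^4 * T < 12 * d0 * Dd^2 * \<Delta>" using Dd Del
      by (simp add: field_simps power2_eq_square power4_eq_xxxx)
    have "12 * d0 * Dd^2 / \<epsilon>^4 * \<Delta> \<le> real T"
      using TB d0 Dd e4 Del by (smt (verit) divide_nonneg_nonneg max.cobounded2 mult_left_mono mult_nonneg_nonneg zero_le_power2)
    then have "12 * d0 * Dd^2 * \<Delta> \<le> \<epsilon>^4 * T" using e4 by (simp add: field_simps)
    then show False using B by simp
  qed
qed

end

theorem corollary1:
  fixes f :: "real^'n \<Rightarrow> real" and gf :: "real^'n \<Rightarrow> real^'n"
    and s x0 :: "real^'n" and D :: "(real^'n^'n) measure"
    and Lf \<epsilon> \<gamma> :: real and T :: nat
  assumes D_prob: "prob_space D"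
    and D_sets: "sets D = sets borel"
    and ES: "integrable D (\<lambda>S. S)" "(\<integral>S. S \<partial>D) = mat 1"
    and ESTS: "integrable D (\<lambda>S. transpose S ** S)"
    and smooth: "L_smooth Lf f gf"
    and bdd: "bdd_below (range f)"
    and Lmax_fin: "\<exists>L. AE S in D. lambda_max (transpose S ** S) \<le> L"
    and Delta_pos: "Inf (range (f_tilde f s D)) - Inf (range f) > 0"
    and eps: "\<epsilon> > 0"
    and T_pos: "T > 0"
    and T_bound: "real T \<ge> 12 * (f_tilde f s D x0 - Inf (range (f_tilde f s D)))
                     * (Lf * sqrt (L_D D * L_S_max D))\<^sup>2 / \<epsilon> ^ 4
                     * max (3 * (f_tilde f s D x0 - Inf (range (f_tilde f s D))))
                           (Inf (range (f_tilde f s D)) - Inf (range f))"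
    and gamma: "\<gamma> = min (1 / (Lf * sqrt (L_D D * L_S_max D) * sqrt (real T)))
                        (\<epsilon>\<^sup>2 / (2 * (Lf * sqrt (L_D D * L_S_max D))\<^sup>2
                              * (Inf (range (f_tilde f s D)) - Inf (range f))))"
  shows "Min ((\<lambda>t. \<integral>\<^sup>+ \<omega>. ennreal ((norm (grad (f_tilde f s D) (dsgd gf s \<gamma> x0 \<omega> t)))\<^sup>2)
                     \<partial>(PiM UNIV (\<lambda>_. D))) ` {..<T}) \<le> ennreal (\<epsilon>\<^sup>2)"
proof -
  have H: "dsgd_setting f gf s D Lf"
    unfolding dsgd_setting_def using assms by blast
  interpret dsgd_setting f gf s D Lf by (rule H)
  show ?thesis by (rule main[OF eps T_pos T_bound gamma])
qed

end
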